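(* Let $\phi\in\mathrm{Homeo}(\overline{\mathbb D}^2,\partial\overline{\mathbb D}^2)$ preserve the coherent probability measures $\lambda_1,\dots,\lambda_n$ on $\overline{\mathbb D}^2$. Then the map $(\overline{\mathbb D}^2)^n\to\mathcal F_n$, $P_n\mapsto\beta(P_n;\phi)$ (defined on the set where $\beta(P_n;\phi)$ is defined), is measurable with respect to the product measure $\lambda_1\times\cdots\times\lambda_n$.
   Context: $\overline{\mathbb D}^2$ is the closed unit disk in $\mathbb R^2$, $\mathbb D^2$ its interior. Fix $n\ge1$ and distinct points $q_1,\dots,q_n\in\mathbb D^2$ equally spaced, in this order, on a diameter. The Artin braid group $B_n$ has generators $\sigma_1,\dots,\sigma_{n-1}$ with relations $\sigma_i\sigma_j=\sigma_j\sigma_i$ ($|i-j|\ge2$) and $\sigma_i\sigma_{i+1}\sigma_i=\sigma_{i+1}\sigma_i\sigma_{i+1}$; geometrically, $B_n$ is the set of equivalence classes (under continuous deformation through such objects) of geometrical braids, i.e. unions of $n$ arcs $\{(\gamma_i(t),t):t\in[0,1]\}\subset\mathbb D^2\times[0,1]$ with $\gamma_i(t)\ne\gamma_j(t)$ for $i\ne j$, joining $\{q_1,\dots,q_n\}\times\{0\}$ to $\{q_1,\dots,q_n\}\times\{1\}$, with product given by concatenation (the first factor below the second). The pure braid group $\mathcal F_n$ consists of classes with $\gamma_i(0)=\gamma_i(1)$ for all $i$. $\mathrm{Homeo}(\overline{\mathbb D}^2,\partial\overline{\mathbb D}^2)$ is the group of homeomorphisms of $\overline{\mathbb D}^2$ equal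 to the identity near the boundary. $\Omega^{2n}$ is the set of $(p_1,\dots,p_n)\in(\overline{\mathbb D}^2)^n$ such that for all $i\ne j$ and all $s\in[0,1]$, $(1-s)q_i+sp_i\ne(1-s)q_j+sp_j$. For $\phi\in\mathrm{Homeo}(\overline{\mathbb D}^2,\partial\overline{\mathbb D}^2)$ and $P_n=(p_1,\dots,p_n)$ with pairwise distinct $p_i\in\mathbb D^2$ such that both $P_n$ and $(\phi(p_1),\dots,\phi(p_n))$ lie in $\Omega^{2n}$, the braid $\beta(P_n;\phi)\in\mathcal F_n$ is defined ("$\beta(P_n;\phi)$ is defined") as the class of the geometrical braid whose $i$-th strand is: the segment from $(q_i,0)$ to $(p_i,1/3)$, then the arc $(\phi_{3t-1}(p_i),t)$, $t\in[1/3,2/3]$, where $(\phi_\tau)_{\tau\in[0,1]}$ is any isotopy in $\mathrm{Homeo}(\overline{\mathbb D}^2,\partial\overline{\mathbb D}^2)$ from the identity to $\phi$, then the segment from $(\phi(p_i),2/3)$ to $(q_i,1)$; this class does not depend on the isotopy. An $n$-tuple $\lambda_1,\dots,\lambda_n$ of probability measures on $\overline{\mathbb D}^2$ is coherent if $\Omega^{2n}$ has full measure for $\lambda_1\times\cdots\times\lambda_n$. *)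

theory Defs
  imports "HOL-Probability.Probability"
begin

text \<open>The closed unit disk is cball 0 1 in the complex plane (identified with R^2),
  its interior is ball 0 1. An n-tuple of points is a function nat => complex; only the
  indices i < n are relevant.\<close>

text \<open>The base points q_1..q_n (here indexed 0..n-1): equally spaced, in order,
  on the real diameter.\<close>
definition qpt :: "nat \<Rightarrow> nat \<Rightarrow> complex" where
  "qpt n i = complex_of_real ((2 * real i + 2 - (real n + 1)) / (real n + 1))"

definition base_conf :: "nat \<Rightarrow> (nat \<Rightarrow> complex)" where
  "base_conf n = (\<lambda>i. if i < n then qpt n i else 0)"

definition conf :: "nat \<Rightarrow> (nat \<Rightarrow> complex) set" where
  "conf n = {x. (\<forall>i<n. x i \<in> ball 0 1) \<and> (\<forall>i<n. \<forall>j<n. i \<noteq> j \<longrightarrow> x i \<noteq> x j)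
                \<and> (\<forall>i. n \<le> i \<longrightarrow> x i = 0)}"

definition braid_class :: "nat \<Rightarrow> (real \<Rightarrow> (nat \<Rightarrow> complex)) \<Rightarrow> (real \<Rightarrow> (nat \<Rightarrow> complex)) set" where
  "braid_class n g = {h. homotopic_paths (conf n) g h}"

text \<open>The pure braid group F_n (as a set of classes of pure geometric braids).\<close>
definition pure_braids :: "nat \<Rightarrow> (real \<Rightarrow> (nat \<Rightarrow> complex)) set set" where
  "pure_braids n = {b. \<exists>g. b = braid_class n g \<and> path g \<and> path_image g \<subseteq> conf n
       \<and> pathstart g = base_conf n \<and> pathfinish g = base_conf n}"

definition homeo_bd :: "(complex \<Rightarrow> complex) \<Rightarrow> bool" where
  "homeo_bd \<phi> \<longleftrightarrow> (\<exists>\<psi>. homeomorphism (cball 0 1) (cball 0 1) \<phi> \<psi>)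
      \<and> (\<exists>e>0. \<forall>x\<in>cball 0 1. 1 - e < norm x \<longrightarrow> \<phi> x = x)"

definition isotopy :: "(real \<Rightarrow> complex \<Rightarrow> complex) \<Rightarrow> (complex \<Rightarrow> complex) \<Rightarrow> bool" where
  "isotopy H \<phi> \<longleftrightarrow> continuous_on ({0..1} \<times> cball 0 1) (\<lambda>(t, x). H t x)
      \<and> (\<forall>t\<in>{0..1}. homeo_bd (H t))
      \<and> (\<forall>x\<in>cball 0 1. H 0 x = x \<and> H 1 x = \<phi> x)"

definition Omega :: "nat \<Rightarrow> (nat \<Rightarrow> complex) set" where
  "Omega n = {p. (\<forall>i<n. p i \<in> cball 0 1) \<and>
      (\<forall>i<n. \<forall>j<n. i \<noteq> j \<longrightarrow> (\<forall>s\<in>{0..1::real}.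
          (1 - s) *\<^sub>R qpt n i + s *\<^sub>R p i \<noteq> (1 - s) *\<^sub>R qpt n j + s *\<^sub>R p j))}"

definition braid_path :: "nat \<Rightarrow> (complex \<Rightarrow> complex) \<Rightarrow> (real \<Rightarrow> complex \<Rightarrow> complex)
    \<Rightarrow> (nat \<Rightarrow> complex) \<Rightarrow> real \<Rightarrow> (nat \<Rightarrow> complex)" where
  "braid_path n \<phi> H P t = (\<lambda>i. if i < n then
       (if t \<le> 1/3 then (1 - 3*t) *\<^sub>R qpt n i + (3*t) *\<^sub>R P i
        else if t \<le> 2/3 then H (3*t - 1) (P i)
        else (3 - 3*t) *\<^sub>R \<phi> (P i) + (3*t - 2) *\<^sub>R qpt n i)
     else 0)"

definition beta_defined :: "nat \<Rightarrow> (complex \<Rightarrow> complex) \<Rightarrow> (nat \<Rightarrow> complex) \<Rightarrow> bool" where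
  "beta_defined n \<phi> P \<longleftrightarrow> (\<forall>i<n. P i \<in> ball 0 1) \<and> (\<forall>i<n. \<forall>j<n. i \<noteq> j \<longrightarrow> P i \<noteq> P j)
      \<and> P \<in> Omega n \<and> (\<lambda>i. \<phi> (P i)) \<in> Omega n"

text \<open>beta(P; phi): the class of the geometric braid for any isotopy (independent of it).\<close>
definition beta :: "nat \<Rightarrow> (complex \<Rightarrow> complex) \<Rightarrow> (nat \<Rightarrow> complex) \<Rightarrow> (real \<Rightarrow> (nat \<Rightarrow> complex)) set" where
  "beta n \<phi> P = (SOME b. \<exists>H. isotopy H \<phi> \<and> b = braid_class n (braid_path n \<phi> H P))"

definition coherent :: "nat \<Rightarrow> (nat \<Rightarrow> complex measure) \<Rightarrow> bool" where
  "coherent n \<mu> \<longleftrightarrow> (let M = PiM {..<n} \<mu> in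
      {P \<in> space M. P \<in> Omega n} \<in> sets M \<and> emeasure M {P \<in> space M. P \<in> Omega n} = 1)"

definition preserves :: "(complex \<Rightarrow> complex) \<Rightarrow> complex measure \<Rightarrow> bool" where
  "preserves \<phi> M \<longleftrightarrow> \<phi> \<in> measurable M M \<and> distr M M \<phi> = M"

end

theory Submission
  imports Defs
begin


lemma hb_props:
  assumes "homeo_bd g"
  shows "continuous_on (cball 0 1) g" and "\<And>x. x \<in> cball 0 1 \<Longrightarrow> g x \<in> cball 0 1"
    and "inj_on g (cball 0 1)" and "\<And>y. norm y = 1 \<Longrightarrow> g y = y"
    and "\<And>x. x \<in> ball 0 1 \<Longrightarrow> g x \<in> ball 0 1"
proof -
  obtain \<psi> where h: "homeomorphism (cball 0 1) (cball 0 1) g \<psi>" using assms homeo_bd_def by blast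
  obtain e where e: "e > 0" "\<forall>x\<in>cball 0 1. 1 - e < norm x \<longrightarrow> g x = x" using assms homeo_bd_def by blast
  show c: "continuous_on (cball 0 1) g" using h homeomorphism_cont1 by blast
  show im: "\<And>x. x \<in> cball 0 1 \<Longrightarrow> g x \<in> cball 0 1" using homeomorphism_image1[OF h] by blast
  show inj: "inj_on g (cball 0 1)" using homeomorphism_apply1[OF h] by (metis inj_on_inverseI)
  show fx: "\<And>y. norm y = 1 \<Longrightarrow> g y = y" using e by auto
  fix x :: complex assume x: "x \<in> ball 0 1"
  show "g x \<in> ball 0 1"
  proof (rule ccontr)
    assume "g x \<notin> ball 0 1"
    then have "norm (g x) = 1" using im[of x] x by auto
    then have "g (g x) = g x" using fx by blast
    then have "g x = x" using inj im[of x] x by (auto dest: inj_onD)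
    then show False using \<open>norm (g x) = 1\<close> x by auto
  qed
qed

lemma qpt_ball: "i < n \<Longrightarrow> qpt n i \<in> ball 0 1"
proof -
  assume i: "i < n"
  have "\<bar>(2 * real i + 2 - (real n + 1)) / (real n + 1)\<bar> < 1"
    using i by (auto simp: abs_less_iff field_simps)
  then show ?thesis by (simp only: qpt_def norm_of_real mem_ball_0)
qed

lemma qpt_inj: "qpt n i = qpt n j \<Longrightarrow> i = j"
  by (simp only: qpt_def of_real_eq_iff) (auto simp: field_simps)

lemma bp_start: "braid_path n \<phi> H P 0 = base_conf n"
  by (auto simp: braid_path_def base_conf_def)

lemma bp_finish: "braid_path n \<phi> H P 1 = base_conf n"
  by (auto simp: braid_path_def base_conf_def)

lemma comb_ball: "a \<in> ball (0::complex) 1 \<Longrightarrow> b \<in> ball 0 1 \<Longrightarrow> 0 \<le> u \<Longrightarrow> 0 \<le> v \<Longrightarrow> u + v = 1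
   \<Longrightarrow> u *\<^sub>R a + v *\<^sub>R b \<in> ball 0 1"
  by (rule convexD[OF convex_ball])

lemma bp_conf:
  assumes phi: "homeo_bd \<phi>"
    and Hinj: "\<And>\<tau>. \<tau> \<in> {0..1} \<Longrightarrow> inj_on (H \<tau>) (cball 0 1)"
    and Hball: "\<And>\<tau> x. \<tau> \<in> {0..1} \<Longrightarrow> x \<in> ball 0 1 \<Longrightarrow> H \<tau> x \<in> ball 0 1"
    and bd: "beta_defined n \<phi> P"
    and t: "t \<in> {0..1}"
  shows "braid_path n \<phi> H P t \<in> conf n"
proof -
  have Pb: "\<And>i. i < n \<Longrightarrow> P i \<in> ball 0 1" and Pd: "\<And>i j. i < n \<Longrightarrow> j < n \<Longrightarrow> i \<noteq> j \<Longrightarrow> P i \<noteq> P j"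
    and PO: "P \<in> Omega n" and PhO: "(\<lambda>i. \<phi> (P i)) \<in> Omega n"
    using bd by (auto simp: beta_defined_def)
  have phib: "\<And>x. x \<in> ball 0 1 \<Longrightarrow> \<phi> x \<in> ball 0 1" using hb_props[OF phi] by blast
  have seg: "\<And>i j s. i < n \<Longrightarrow> j < n \<Longrightarrow> i \<noteq> j \<Longrightarrow> s \<in> {0..1} \<Longrightarrow>
     (1 - s) *\<^sub>R qpt n i + s *\<^sub>R P i \<noteq> (1 - s) *\<^sub>R qpt n j + s *\<^sub>R P j"
    using PO by (auto simp: Omega_def)
  have seg2: "\<And>i j s. i < n \<Longrightarrow> j < n \<Longrightarrow> i \<noteq> j \<Longrightarrow> s \<in> {0..1} \<Longrightarrow>
     (1 - s) *\<^sub>R qpt n i + s *\<^sub>R \<phi> (P i) \<noteq> (1 - s) *\<^sub>R qpt n j + s *\<^sub>R \<phi> (P j)"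
    using PhO by (auto simp: Omega_def)
  show ?thesis
    unfolding conf_def
  proof (intro CollectI conjI allI impI)
    fix i assume i: "i < n"
    show "braid_path n \<phi> H P t i \<in> ball 0 1"
    proof -
      consider "t \<le> 1/3" | "1/3 < t" "t \<le> 2/3" | "2/3 < t" by linarith
      then show ?thesis
      proof cases
        case 1
        have "(1 - 3*t) *\<^sub>R qpt n i + (3*t) *\<^sub>R P i \<in> ball 0 1"
          by (rule comb_ball[OF qpt_ball[OF i] Pb[OF i]]) (use 1 t in auto)
        then show ?thesis using i 1 by (simp add: braid_path_def)
      next
        case 2
        have "H (3*t-1) (P i) \<in> ball 0 1" by (rule Hball) (use 2 i Pb in auto)
        then show ?thesis using 2 i by (simp add: braid_path_def)
      next
        case 3
        have "(3 - 3*t) *\<^sub>R \<phi> (P i) + (3*t - 2) *\<^sub>R qpt n i \<in> ball 0 1"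
          by (rule comb_ball[OF phib[OF Pb[OF i]] qpt_ball[OF i]]) (use 3 t in auto)
        then show ?thesis using i 3 by (simp add: braid_path_def)
      qed
    qed
  next
    fix i j assume i: "i < n" and j: "j < n" and ij: "i \<noteq> j"
    show "braid_path n \<phi> H P t i \<noteq> braid_path n \<phi> H P t j"
    proof -
      consider "t \<le> 1/3" | "1/3 < t" "t \<le> 2/3" | "2/3 < t" by linarith
      then show ?thesis
      proof cases
        case 1
        then show ?thesis using i j ij t seg[of i j "3*t"] by (auto simp: braid_path_def)
      next
        case 2
        have "H (3*t-1) (P i) \<noteq> H (3*t-1) (P j)"
          using Hinj[of "3*t-1"] 2 Pd[OF i j ij] Pb[OF i] Pb[OF j] by (auto dest: inj_onD)
        then show ?thesis using 2 i j by (auto simp: braid_path_def)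
      next
        case 3
        have e: "\<And>k. (3 - 3 * t) *\<^sub>R \<phi> (P k) + (3 * t - 2) *\<^sub>R qpt n k
            = (1 - (3 - 3*t)) *\<^sub>R qpt n k + (3 - 3*t) *\<^sub>R \<phi> (P k)"
          by (simp add: algebra_simps)
        show ?thesis using i j ij t 3 seg2[of i j "3 - 3*t"] by (auto simp: braid_path_def e)
      qed
    qed
  next
    fix i assume "n \<le> i"
    then show "braid_path n \<phi> H P t i = 0" by (simp add: braid_path_def)
  qed
qed

lemma GL:
  fixes K :: "real \<times> real \<Rightarrow> complex \<Rightarrow> complex" and Q :: "real \<Rightarrow> nat \<Rightarrow> complex"
  assumes phi: "homeo_bd \<phi>"
   and Kc: "continuous_on (({0..1}\<times>{0..1}) \<times> cball 0 1) (\<lambda>(z,x). K z x)"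
   and Kinj: "\<And>s \<tau>. s \<in> {0..1} \<Longrightarrow> \<tau> \<in> {0..1} \<Longrightarrow> inj_on (K (s,\<tau>)) (cball 0 1)"
   and Kball: "\<And>s \<tau> x. s \<in> {0..1} \<Longrightarrow> \<tau> \<in> {0..1} \<Longrightarrow> x \<in> ball 0 1 \<Longrightarrow> K (s,\<tau>) x \<in> ball 0 1"
   and K0: "\<And>s x. s \<in> {0..1} \<Longrightarrow> x \<in> cball 0 1 \<Longrightarrow> K (s,0) x = x"
   and K1: "\<And>s x. s \<in> {0..1} \<Longrightarrow> x \<in> cball 0 1 \<Longrightarrow> K (s,1) x = \<phi> x"
   and Qc: "\<And>i. continuous_on {0..1} (\<lambda>s. Q s i)"
   and Qd: "\<And>s. s \<in> {0..1} \<Longrightarrow> beta_defined n \<phi> (Q s)"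
  shows "homotopic_paths (conf n) (braid_path n \<phi> (\<lambda>\<tau>. K (0,\<tau>)) (Q 0)) (braid_path n \<phi> (\<lambda>\<tau>. K (1,\<tau>)) (Q 1))"
proof -
  define h where "h = (\<lambda>z::real\<times>real. braid_path n \<phi> (\<lambda>\<tau>. K (fst z,\<tau>)) (Q (fst z)) (snd z))"
  let ?S = "{0..1::real} \<times> {0..1::real}"
  have Qb: "\<And>s i. s \<in> {0..1} \<Longrightarrow> i < n \<Longrightarrow> Q s i \<in> ball 0 1" using Qd by (auto simp: beta_defined_def)
  have phic: "continuous_on (cball 0 1) \<phi>" using hb_props[OF phi] by blast
  have cont: "continuous_on ?S h"
    unfolding h_def
  proof (rule continuous_on_coordinatewise_then_product)
    fix i
    show "continuous_on ?S (\<lambda>z. braid_path n \<phi> (\<lambda>\<tau>. K (fst z, \<tau>)) (Q (fst z)) (snd z) i)"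
    proof (cases "i < n")
      case False
      then show ?thesis by (simp add: braid_path_def)
    next
      case True
      have Qc': "continuous_on A (\<lambda>z. Q (fst z) i)" if "A \<subseteq> ?S" for A
        by (rule continuous_on_compose2[OF Qc[of i]]) (use that in \<open>auto intro!: continuous_intros\<close>)
      have c1: "continuous_on {z \<in> ?S. snd z \<le> 1/3} (\<lambda>z. (1 - 3* snd z) *\<^sub>R qpt n i + (3* snd z) *\<^sub>R Q (fst z) i)"
        by (intro continuous_intros Qc') auto
      have c2: "continuous_on {z \<in> {z\<in>?S. 1/3 \<le> snd z}. snd z \<le> 2/3} (\<lambda>z. K (fst z, 3* snd z - 1) (Q (fst z) i))"
      proof -
        have im: "(\<lambda>z. ((fst z, 3* snd z - 1), Q (fst z) i)) ` {z \<in> {z\<in>?S. 1/3 \<le> snd z}. snd z \<le> 2/3}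
            \<subseteq> ({0..1}\<times>{0..1}) \<times> cball 0 1"
          using Qb True by fastforce
        have "continuous_on {z \<in> {z\<in>?S. 1/3 \<le> snd z}. snd z \<le> 2/3} (\<lambda>z. (\<lambda>(z,x). K z x) ((fst z, 3* snd z - 1), Q (fst z) i))"
          by (rule continuous_on_compose2[OF Kc _ im]) (intro continuous_intros Qc'; auto)
        then show ?thesis by simp
      qed
      have c3: "continuous_on {z \<in> {z\<in>?S. 1/3 \<le> snd z}. 2/3 \<le> snd z} (\<lambda>z. (3 - 3* snd z) *\<^sub>R \<phi> (Q (fst z) i) + (3* snd z - 2) *\<^sub>R qpt n i)"
      proof -
        have "continuous_on {z \<in> {z\<in>?S. 1/3 \<le> snd z}. 2/3 \<le> snd z} (\<lambda>z. \<phi> (Q (fst z) i))"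
          by (rule continuous_on_compose2[OF phic Qc']) (use Qb True in fastforce)+
        then show ?thesis by (intro continuous_intros)
      qed
      have c23: "continuous_on {z\<in>?S. 1/3 \<le> snd z} (\<lambda>z. if snd z \<le> 2/3 then K (fst z, 3* snd z - 1) (Q (fst z) i)
           else (3 - 3* snd z) *\<^sub>R \<phi> (Q (fst z) i) + (3* snd z - 2) *\<^sub>R qpt n i)"
      proof (rule continuous_on_cases_le[OF c2 c3])
        show "continuous_on {z \<in> ?S. 1 / 3 \<le> snd z} snd" by (intro continuous_intros)
        fix z assume z: "z \<in> {z \<in> ?S. 1 / 3 \<le> snd z}" "snd z = 2/3"
        then have e: "3 * snd z - 1 = 1" "3 - 3 * snd z = 1" "3 * snd z - 2 = 0" by auto
        have q: "Q (fst z) i \<in> cball 0 1" using Qb[of "fst z" i] True z by auto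
        have "K (fst z, 3 * snd z - 1) (Q (fst z) i) = K (fst z, 1) (Q (fst z) i)" by (simp only: e)
        also have "\<dots> = \<phi> (Q (fst z) i)" using K1[OF _ q] z by auto
        also have "\<dots> = (3 - 3 * snd z) *\<^sub>R \<phi> (Q (fst z) i) + (3 * snd z - 2) *\<^sub>R qpt n i" by (simp only: e) simp
        finally show "K (fst z, 3 * snd z - 1) (Q (fst z) i) = (3 - 3 * snd z) *\<^sub>R \<phi> (Q (fst z) i) + (3 * snd z - 2) *\<^sub>R qpt n i" .
      qed
      have "continuous_on ?S (\<lambda>z. if snd z \<le> 1/3 then (1 - 3* snd z) *\<^sub>R qpt n i + (3* snd z) *\<^sub>R Q (fst z) i
           else if snd z \<le> 2/3 then K (fst z, 3* snd z - 1) (Q (fst z) i)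
           else (3 - 3* snd z) *\<^sub>R \<phi> (Q (fst z) i) + (3* snd z - 2) *\<^sub>R qpt n i)"
      proof (rule continuous_on_cases_le[OF c1 c23])
        show "continuous_on ?S snd" by (intro continuous_intros)
        fix z assume z: "z \<in> ?S" "snd z = 1/3"
        then have e: "3 * snd z - 1 = 0" "1 - 3 * snd z = 0" "3 * snd z = 1" by auto
        have q: "Q (fst z) i \<in> cball 0 1" using Qb[of "fst z" i] True z by auto
        have le: "snd z \<le> 2/3" using z by simp
        have "K (fst z, 3 * snd z - 1) (Q (fst z) i) = K (fst z, 0) (Q (fst z) i)" by (simp only: e(1))
        also have "\<dots> = Q (fst z) i" using K0[OF _ q] z by auto
        finally show "(1 - 3 * snd z) *\<^sub>R qpt n i + (3 * snd z) *\<^sub>R Q (fst z) i = (if snd z \<le> 2/3 then K (fst z, 3 * snd z - 1) (Q (fst z) i)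
           else (3 - 3 * snd z) *\<^sub>R \<phi> (Q (fst z) i) + (3 * snd z - 2) *\<^sub>R qpt n i)"
          using le by (simp add: e)
      qed
      then show ?thesis using True by (simp add: braid_path_def)
    qed
  qed
  show ?thesis
    unfolding homotopic_paths
  proof (intro exI conjI ballI)
    show "continuous_on ?S h" by (rule cont)
    show "h \<in> ?S \<rightarrow> conf n"
    proof
      fix z assume z: "z \<in> ?S"
      show "h z \<in> conf n" unfolding h_def
      proof (rule bp_conf[OF phi])
        show "\<And>\<tau>. \<tau> \<in> {0..1} \<Longrightarrow> inj_on (K (fst z, \<tau>)) (cball 0 1)" using z Kinj by auto
        show "\<And>\<tau> x. \<tau> \<in> {0..1} \<Longrightarrow> x \<in> ball 0 1 \<Longrightarrow> K (fst z, \<tau>) x \<in> ball 0 1" using z Kball by auto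
      qed (use z Qd in auto)
    qed
    fix x :: real assume "x \<in> {0..1}"
    show "h (0, x) = braid_path n \<phi> (\<lambda>\<tau>. K (0,\<tau>)) (Q 0) x" by (simp add: h_def)
    show "h (1, x) = braid_path n \<phi> (\<lambda>\<tau>. K (1,\<tau>)) (Q 1) x" by (simp add: h_def)
  next
    fix t :: real assume "t \<in> {0..1}"
    show "pathstart (h \<circ> Pair t) = pathstart (braid_path n \<phi> (\<lambda>\<tau>. K (0, \<tau>)) (Q 0))"
      by (simp add: pathstart_def h_def bp_start)
    show "pathfinish (h \<circ> Pair t) = pathfinish (braid_path n \<phi> (\<lambda>\<tau>. K (0, \<tau>)) (Q 0))"
      by (simp add: pathfinish_def h_def bp_finish)
  qed
qed

definition alex :: "real \<Rightarrow> (complex \<Rightarrow> complex) \<Rightarrow> complex \<Rightarrow> complex" where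
  "alex u g x = (if norm x \<le> u then u *\<^sub>R g ((1/u) *\<^sub>R x) else x)"

lemma alex_cont:
  fixes G :: "'a::topological_space \<Rightarrow> complex \<Rightarrow> complex"
  assumes Gc: "continuous_on (T \<times> cball 0 1) (\<lambda>(t,x). G t x)"
   and Gim: "\<And>t x. t \<in> T \<Longrightarrow> x \<in> cball 0 1 \<Longrightarrow> G t x \<in> cball 0 1"
   and Gfix: "\<And>t y. t \<in> T \<Longrightarrow> norm y = 1 \<Longrightarrow> G t y = y"
  shows "continuous_on (({0..1} \<times> T) \<times> cball 0 1) (\<lambda>((u,t),x). alex u (G t) x)"
proof -
  let ?Z = "({0..1::real} \<times> T) \<times> cball (0::complex) 1"
  define N where "N = (\<lambda>w::(real\<times>'a::topological_space)\<times>complex. norm (snd w) - fst (fst w))"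
  define g1 where "g1 = (\<lambda>w::(real\<times>'a::topological_space)\<times>complex. fst (fst w) *\<^sub>R G (snd (fst w)) ((1 / fst (fst w)) *\<^sub>R snd w))"
  have eq: "(\<lambda>((u,t),x). alex u (G t) x) = (\<lambda>w. if N w \<le> 0 then g1 w else snd w)"
    by (auto simp: alex_def N_def g1_def fun_eq_iff)
  let ?Z1 = "{w \<in> ?Z. N w \<le> 0}"
  have bound: "norm (g1 w) \<le> fst (fst w)" if w: "w \<in> ?Z1" for w
  proof (cases "fst (fst w) = 0")
    case True then show ?thesis by (simp add: g1_def)
  next
    case False
    then have u: "fst (fst w) > 0" using w by auto
    have "(1 / fst (fst w)) *\<^sub>R snd w \<in> cball 0 1"
      using w u by (auto simp: N_def field_simps)
    then have "norm (G (snd (fst w)) ((1 / fst (fst w)) *\<^sub>R snd w)) \<le> 1"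
      using Gim w by force
    then show ?thesis using u by (simp add: g1_def mult_le_cancel_left1)
  qed
  have c1: "continuous_on ?Z1 g1"
    unfolding continuous_on_def
  proof
    fix w assume w: "w \<in> ?Z1"
    show "(g1 \<longlongrightarrow> g1 w) (at w within ?Z1)"
    proof (cases "fst (fst w) = 0")
      case True
      then have "snd w = 0" using w by (auto simp: N_def)
      then have g0: "g1 w = 0" using True by (simp add: g1_def)
      have "(g1 \<longlongrightarrow> 0) (at w within ?Z1)"
      proof (rule Lim_null_comparison)
        show "\<forall>\<^sub>F x in at w within ?Z1. norm (g1 x) \<le> fst (fst x)"
          using bound by (auto simp: eventually_at_filter)
        have "((\<lambda>x. fst (fst x)) \<longlongrightarrow> fst (fst w)) (at w within ?Z1)"
          by (intro tendsto_intros)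
        then show "((\<lambda>x. fst (fst x)) \<longlongrightarrow> 0) (at w within ?Z1)" using True by simp
      qed
      then show ?thesis using g0 by simp
    next
      case False
      then have u: "fst (fst w) > 0" using w by auto
      let ?U = "{w::(real\<times>'a::topological_space)\<times>complex. fst (fst w) > 0}"
      have oU: "open ?U"
        by (rule open_Collect_less) (intro continuous_intros)+
      have at: "at w within ?Z1 = at w within (?Z1 \<inter> ?U)"
        by (rule at_within_nhd[OF _ oU]) (use u in auto)
      have cU: "continuous_on (?Z1 \<inter> ?U) g1"
      proof -
        have im: "(\<lambda>w. (snd (fst w), (1 / fst (fst w)) *\<^sub>R snd w)) ` (?Z1 \<inter> ?U) \<subseteq> T \<times> cball 0 1"
          by (auto simp: N_def field_simps)
        have "continuous_on (?Z1 \<inter> ?U) (\<lambda>w. (\<lambda>(t,x). G t x) (snd (fst w), (1 / fst (fst w)) *\<^sub>R snd w))"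
          by (rule continuous_on_compose2[OF Gc _ im]) (intro continuous_intros; auto)
        then have "continuous_on (?Z1 \<inter> ?U) (\<lambda>w. G (snd (fst w)) ((1 / fst (fst w)) *\<^sub>R snd w))"
          by simp
        then show ?thesis unfolding g1_def by (intro continuous_intros)
      qed
      then have "(g1 \<longlongrightarrow> g1 w) (at w within (?Z1 \<inter> ?U))"
        using w u by (auto simp: continuous_on_def)
      then show ?thesis using at by simp
    qed
  qed
  have "continuous_on ?Z (\<lambda>w. if N w \<le> 0 then g1 w else snd w)"
  proof (rule continuous_on_cases_le[OF c1])
    show "continuous_on {w \<in> ?Z. 0 \<le> N w} snd" by (intro continuous_intros)
    show "continuous_on ?Z N" unfolding N_def by (intro continuous_intros)
    fix w assume w: "w \<in> ?Z" "N w = 0"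
    show "g1 w = snd w"
    proof (cases "fst (fst w) = 0")
      case True
      then show ?thesis using w by (simp add: g1_def N_def)
    next
      case False
      then have u: "fst (fst w) > 0" using w by auto
      have "norm ((1 / fst (fst w)) *\<^sub>R snd w) = 1" using w u by (simp add: N_def)
      then have "G (snd (fst w)) ((1 / fst (fst w)) *\<^sub>R snd w) = (1 / fst (fst w)) *\<^sub>R snd w"
        using Gfix w by auto
      then show ?thesis using u by (simp add: g1_def)
    qed
  qed
  then show ?thesis using eq by simp
qed

lemma alex_0: "alex 0 g x = x"
  by (simp add: alex_def)

lemma alex_1: "x \<in> cball 0 1 \<Longrightarrow> alex 1 g x = g x"
  by (simp add: alex_def)

lemma alex_cong: "x \<in> cball 0 1 \<Longrightarrow> (\<And>y. y \<in> cball 0 1 \<Longrightarrow> g y = g' y) \<Longrightarrow> 0 \<le> u \<Longrightarrow> alex u g x = alex u g' x"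
proof (cases "norm x \<le> u \<and> u > 0")
  case True
  assume "\<And>y. y \<in> cball 0 1 \<Longrightarrow> g y = g' y"
  moreover have "(1/u) *\<^sub>R x \<in> cball 0 1" using True by (auto simp: field_simps)
  ultimately show ?thesis using True by (simp add: alex_def)
next
  case False
  assume "0 \<le> u"
  then show ?thesis using False by (auto simp: alex_def)
qed

lemma alex_idfun: "x \<in> cball 0 1 \<Longrightarrow> (\<And>y. y \<in> cball 0 1 \<Longrightarrow> g y = y) \<Longrightarrow> 0 \<le> u \<Longrightarrow> alex u g x = x"
proof -
  assume x: "x \<in> cball 0 1" and g: "\<And>y. y \<in> cball 0 1 \<Longrightarrow> g y = y" and u: "0 \<le> u"
  have "alex u g x = alex u id x" by (rule alex_cong[OF x]) (use g u in auto)
  also have "\<dots> = x" by (cases "u = 0") (auto simp: alex_def)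
  finally show ?thesis .
qed

lemma alex_small:
  assumes gim: "\<And>y. y \<in> cball 0 1 \<Longrightarrow> g y \<in> cball 0 1" and u: "0 \<le> u" and x: "norm x \<le> u"
  shows "norm (alex u g x) \<le> u"
proof (cases "u = 0")
  case True then show ?thesis using x by (simp add: alex_def)
next
  case False
  then have "(1/u) *\<^sub>R x \<in> cball 0 1" using u x by (auto simp: field_simps)
  then have "norm (g ((1/u) *\<^sub>R x)) \<le> 1" using gim by auto
  then have "u * norm (g ((1/u) *\<^sub>R x)) \<le> u * 1" using u by (intro mult_left_mono)
  then show ?thesis using x u by (simp add: alex_def)
qed

lemma alex_inv:
  assumes gim: "\<And>y. y \<in> cball 0 1 \<Longrightarrow> g y \<in> cball 0 1" and hg: "\<And>y. y \<in> cball 0 1 \<Longrightarrow> h (g y) = y"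
   and u: "0 \<le> u" and x: "x \<in> cball 0 1"
  shows "alex u h (alex u g x) = x"
proof (cases "norm x \<le> u")
  case True
  show ?thesis
  proof (cases "u = 0")
    case True
    then show ?thesis using \<open>norm x \<le> u\<close> by (simp add: alex_def)
  next
    case False
    have y: "(1/u) *\<^sub>R x \<in> cball 0 1" using True False u by (auto simp: field_simps)
    have "norm (alex u g x) \<le> u" by (rule alex_small[OF gim u True])
    then have "alex u h (alex u g x) = u *\<^sub>R h ((1/u) *\<^sub>R (u *\<^sub>R g ((1/u) *\<^sub>R x)))"
      using True by (simp add: alex_def)
    also have "\<dots> = u *\<^sub>R h (g ((1/u) *\<^sub>R x))" using False by simp
    also have "\<dots> = x" using hg[OF y] False by simp
    finally show ?thesis .
  qed
next
  case False
  then show ?thesis by (simp add: alex_def)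
qed

lemma alex_inj:
  assumes gim: "\<And>y. y \<in> cball 0 1 \<Longrightarrow> g y \<in> cball 0 1" and ginj: "inj_on g (cball 0 1)"
   and u: "0 \<le> u"
  shows "inj_on (alex u g) (cball 0 1)"
proof -
  have gh: "\<And>y. y \<in> cball 0 1 \<Longrightarrow> inv_into (cball 0 1) g (g y) = y" using ginj by simp
  show ?thesis by (rule inj_on_inverseI[where g = "alex u (inv_into (cball 0 1) g)"]) (rule alex_inv[OF gim gh u])
qed

lemma alex_ball:
  assumes gb: "\<And>y. y \<in> ball 0 1 \<Longrightarrow> g y \<in> ball 0 1" and gim: "\<And>y. y \<in> cball 0 1 \<Longrightarrow> g y \<in> cball 0 1"
   and u: "0 \<le> u" "u \<le> 1" and x: "x \<in> ball 0 1"
  shows "alex u g x \<in> ball 0 1"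
proof (cases "norm x \<le> u")
  case True
  show ?thesis
  proof (cases "u = 1")
    case True
    then show ?thesis using x gb by (simp add: alex_def)
  next
    case False
    then show ?thesis using alex_small[of g u x, OF gim u(1) True] u by simp
  qed
next
  case False
  then show ?thesis using x by (simp add: alex_def)
qed

lemma alex_cball:
  assumes gim: "\<And>y. y \<in> cball 0 1 \<Longrightarrow> g y \<in> cball 0 1"
   and u: "0 \<le> u" "u \<le> 1" and x: "x \<in> cball 0 1"
  shows "alex u g x \<in> cball 0 1"
proof (cases "norm x \<le> u")
  case True
  then show ?thesis using alex_small[of g u x, OF gim u(1) True] u by simp
next
  case False
  then show ?thesis using x by (simp add: alex_def)
qed

lemma alex_cont2:
  assumes gc: "continuous_on (cball 0 1) g" and gim: "\<And>y. y \<in> cball 0 1 \<Longrightarrow> g y \<in> cball 0 1"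
   and gfix: "\<And>y. norm y = 1 \<Longrightarrow> g y = y"
  shows "continuous_on ({0..1} \<times> cball 0 1) (\<lambda>(u,x). alex u g x)"
proof -
  have ac: "continuous_on (({0..1} \<times> {0::real}) \<times> cball 0 1) (\<lambda>((u,t),x). alex u ((\<lambda>t. g) t) x)"
  proof (rule alex_cont)
    show "continuous_on ({0::real} \<times> cball 0 1) (\<lambda>(t::real, x). g x)"
    proof -
      have "continuous_on ({0::real} \<times> cball 0 1) (\<lambda>z. g (snd z))"
        by (rule continuous_on_compose2[OF gc]) (auto intro: continuous_intros)
      then show ?thesis by (simp add: case_prod_unfold)
    qed
  qed (use gim gfix in auto)
  have "continuous_on ({0..1} \<times> cball 0 1) (\<lambda>z. (\<lambda>((u,t),x). alex u ((\<lambda>t. g) t) x) ((fst z,0::real),snd z))"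
    by (rule continuous_on_compose2[OF ac, of _ "\<lambda>z. ((fst z,0::real),snd z)"]) (auto intro!: continuous_intros)
  then show ?thesis by (simp add: case_prod_unfold)
qed

lemma alex_cont1:
  assumes gc: "continuous_on (cball 0 1) g" and gim: "\<And>y. y \<in> cball 0 1 \<Longrightarrow> g y \<in> cball 0 1"
   and gfix: "\<And>y. norm y = 1 \<Longrightarrow> g y = y" and u: "u \<in> {0..1}"
  shows "continuous_on (cball 0 1) (alex u g)"
proof -
  have ac: "continuous_on ({0..1} \<times> cball 0 1) (\<lambda>(u,x). alex u g x)" by (rule alex_cont2[OF gc gim gfix])
  have "continuous_on (cball 0 1) (\<lambda>x. (\<lambda>(u,x). alex u g x) (u,x))"
    by (rule continuous_on_compose2[OF ac, of _ "\<lambda>x. (u,x)"]) (use u in \<open>auto intro!: continuous_intros\<close>)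
  then show ?thesis by simp
qed

lemma iso_exists:
  assumes phi: "homeo_bd \<phi>"
  shows "isotopy (\<lambda>u. alex u \<phi>) \<phi>"
proof -
  obtain \<psi> where h: "homeomorphism (cball 0 1) (cball 0 1) \<phi> \<psi>" using phi homeo_bd_def by blast
  obtain e where e: "e > 0" "\<forall>x\<in>cball 0 1. 1 - e < norm x \<longrightarrow> \<phi> x = x" using phi homeo_bd_def by blast
  note P = hb_props[OF phi]
  have psic: "continuous_on (cball 0 1) \<psi>" using homeomorphism_cont2[OF h] .
  have psiim: "\<And>y. y \<in> cball 0 1 \<Longrightarrow> \<psi> y \<in> cball 0 1" using homeomorphism_image2[OF h] by blast
  have psiphi: "\<And>y. y \<in> cball 0 1 \<Longrightarrow> \<psi> (\<phi> y) = y" using homeomorphism_apply1[OF h] by blast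
  have phipsi: "\<And>y. y \<in> cball 0 1 \<Longrightarrow> \<phi> (\<psi> y) = y" using homeomorphism_apply2[OF h] by blast
  have psifix: "\<And>y. norm y = 1 \<Longrightarrow> \<psi> y = y"
  proof -
    fix y :: complex assume y: "norm y = 1"
    then have "\<psi> (\<phi> y) = y" using psiphi by simp
    then show "\<psi> y = y" using P(4)[OF y] by simp
  qed
  show ?thesis
    unfolding isotopy_def
  proof (intro conjI ballI)
    show "continuous_on ({0..1} \<times> cball 0 1) (\<lambda>(t, x). alex t \<phi> x)"
      by (rule alex_cont2[OF P(1) P(2) P(4)])
  next
    fix t :: real assume t: "t \<in> {0..1}"
    show "homeo_bd (alex t \<phi>)"
      unfolding homeo_bd_def
    proof (rule conjI)
      show "\<exists>\<psi>'. homeomorphism (cball 0 1) (cball 0 1) (alex t \<phi>) \<psi>'"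
        unfolding homeomorphism_def
        apply (rule exI[of _ "alex t \<psi>"])
      proof (intro conjI ballI)
        show "\<And>x. x \<in> cball 0 1 \<Longrightarrow> alex t \<psi> (alex t \<phi> x) = x"
          by (rule alex_inv[OF P(2) psiphi]) (use t in auto)
        show "\<And>x. x \<in> cball 0 1 \<Longrightarrow> alex t \<phi> (alex t \<psi> x) = x"
          by (rule alex_inv[OF psiim phipsi]) (use t in auto)
        show "continuous_on (cball 0 1) (alex t \<phi>)" by (rule alex_cont1[OF P(1) P(2) P(4) t])
        show "continuous_on (cball 0 1) (alex t \<psi>)" by (rule alex_cont1[OF psic psiim psifix t])
        show "alex t \<phi> ` cball 0 1 = cball 0 1"
        proof
          show "alex t \<phi> ` cball 0 1 \<subseteq> cball 0 1" using alex_cball[of \<phi> t, OF P(2)] t by auto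
          show "cball 0 1 \<subseteq> alex t \<phi> ` cball 0 1"
          proof
            fix y :: complex assume y: "y \<in> cball 0 1"
            have "y = alex t \<phi> (alex t \<psi> y)" by (rule alex_inv[OF psiim phipsi, symmetric]) (use t y in auto)
            moreover have "alex t \<psi> y \<in> cball 0 1" using alex_cball[of \<psi> t, OF psiim] t y by auto
            ultimately show "y \<in> alex t \<phi> ` cball 0 1" by blast
          qed
        qed
        show "alex t \<psi> ` cball 0 1 = cball 0 1"
        proof
          show "alex t \<psi> ` cball 0 1 \<subseteq> cball 0 1" using alex_cball[of \<psi> t, OF psiim] t by auto
          show "cball 0 1 \<subseteq> alex t \<psi> ` cball 0 1"
          proof
            fix y :: complex assume y: "y \<in> cball 0 1"
            have "y = alex t \<psi> (alex t \<phi> y)" by (rule alex_inv[OF P(2) psiphi, symmetric]) (use t y in auto)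
            moreover have "alex t \<phi> y \<in> cball 0 1" using alex_cball[of \<phi> t, OF P(2)] t y by auto
            ultimately show "y \<in> alex t \<psi> ` cball 0 1" by blast
          qed
        qed
      qed
      show "\<exists>e>0. \<forall>x\<in>cball 0 1. 1 - e < norm x \<longrightarrow> alex t \<phi> x = x"
      proof (cases "t < 1")
        case True
        show ?thesis
          by (rule exI[of _ "1 - t"]) (use True in \<open>auto simp: alex_def\<close>)
      next
        case False
        then have "t = 1" using t by auto
        then show ?thesis using e alex_1 by (metis)
      qed
    qed
  next
    fix x :: complex assume "x \<in> cball 0 1"
    then show "alex 0 \<phi> x = x" "alex 1 \<phi> x = \<phi> x" by (simp_all add: alex_0 alex_1)
  qed
qed

lemma bp_cong:
  assumes "\<And>\<tau> x. \<tau> \<in> {0..1} \<Longrightarrow> x \<in> cball 0 1 \<Longrightarrow> H \<tau> x = H' \<tau> x"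
    and "\<And>i. i < n \<Longrightarrow> P i \<in> cball 0 1"
  shows "braid_path n \<phi> H P = braid_path n \<phi> H' P"
proof (rule ext, rule ext)
  fix t i
  show "braid_path n \<phi> H P t i = braid_path n \<phi> H' P t i"
  proof (cases "i < n \<and> \<not> t \<le> 1/3 \<and> t \<le> 2/3")
    case True
    then have "H (3*t-1) (P i) = H' (3*t-1) (P i)" using assms by auto
    then show ?thesis using True by (simp add: braid_path_def)
  next
    case False
    then show ?thesis by (auto simp: braid_path_def)
  qed
qed

definition su :: "real \<Rightarrow> real" where "su \<tau> = max 0 (\<bar>3*\<tau> - 3/2\<bar> - 1/2)"
definition st :: "real \<Rightarrow> real" where "st \<tau> = min 1 (max 0 (3*\<tau> - 1))"

lemma su_01: "\<tau> \<in> {0..1} \<Longrightarrow> su \<tau> \<in> {0..1}"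
  by (auto simp: su_def)

lemma st_01: "st \<tau> \<in> {0..1}"
  by (auto simp: st_def)

lemma conv01: "a \<in> {0..1} \<Longrightarrow> b \<in> {0..1} \<Longrightarrow> s \<in> {0..1::real} \<Longrightarrow> (1 - s) * a + s * b \<in> {0..1}"
proof -
  assume a: "a \<in> {0..1}" and b: "b \<in> {0..1}" and s: "s \<in> {0..1::real}"
  have "(1 - s) * a \<le> 1 - s" using a s by (intro mult_left_le) auto
  moreover have "s * b \<le> s" using b s by (intro mult_left_le) auto
  moreover have "0 \<le> (1 - s) * a" "0 \<le> s * b" using a b s by auto
  ultimately show ?thesis by auto
qed

lemma isotopy_props:
  assumes "isotopy H \<phi>"
  shows "continuous_on ({0..1} \<times> cball 0 1) (\<lambda>(t, x). H t x)"
    and "\<And>t. t \<in> {0..1} \<Longrightarrow> homeo_bd (H t)"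
    and "\<And>x. x \<in> cball 0 1 \<Longrightarrow> H 0 x = x"
    and "\<And>x. x \<in> cball 0 1 \<Longrightarrow> H 1 x = \<phi> x"
  using assms by (auto simp: isotopy_def)

lemma indep_half:
  assumes phi: "homeo_bd \<phi>" and H: "isotopy H \<phi>" and bd: "beta_defined n \<phi> P"
  shows "homotopic_paths (conf n) (braid_path n \<phi> H P) (braid_path n \<phi> (\<lambda>\<tau>. alex (su \<tau>) (H (st \<tau>))) P)"
proof -
  note HP = isotopy_props[OF H]
  define uu where "uu = (\<lambda>z::real\<times>real. (1 - fst z) * 1 + fst z * su (snd z))"
  define tt where "tt = (\<lambda>z::real\<times>real. (1 - fst z) * snd z + fst z * st (snd z))"
  define K where "K = (\<lambda>z. alex (uu z) (H (tt z)))"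
  have uu01: "uu z \<in> {0..1}" if "z \<in> {0..1} \<times> {0..1}" for z
    unfolding uu_def by (rule conv01) (use that su_01 in auto)
  have tt01: "tt z \<in> {0..1}" if "z \<in> {0..1} \<times> {0..1}" for z
    unfolding tt_def by (rule conv01) (use that st_01 in auto)
  have PB: "\<And>i. i < n \<Longrightarrow> P i \<in> cball 0 1" using bd by (auto simp: beta_defined_def)
  have "homotopic_paths (conf n) (braid_path n \<phi> (\<lambda>\<tau>. K (0,\<tau>)) ((\<lambda>s. P) 0)) (braid_path n \<phi> (\<lambda>\<tau>. K (1,\<tau>)) ((\<lambda>s. P) 1))"
  proof (rule GL[OF phi])
    have ac: "continuous_on (({0..1} \<times> {0..1}) \<times> cball 0 1) (\<lambda>((u,t),x). alex u (H t) x)"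
    proof (rule alex_cont[OF HP(1)])
      show "\<And>t x. t \<in> {0..1} \<Longrightarrow> x \<in> cball 0 1 \<Longrightarrow> H t x \<in> cball 0 1" using hb_props(2)[OF HP(2)] by blast
      show "\<And>t y. t \<in> {0..1} \<Longrightarrow> norm y = 1 \<Longrightarrow> H t y = y" using hb_props(4)[OF HP(2)] by blast
    qed
    have "continuous_on (({0..1} \<times> {0..1}) \<times> cball 0 1) (\<lambda>w. (\<lambda>((u,t),x). alex u (H t) x) ((uu (fst w), tt (fst w)), snd w))"
    proof (rule continuous_on_compose2[OF ac])
      have cu: "continuous_on UNIV uu" and ct: "continuous_on UNIV tt"
        unfolding uu_def tt_def su_def st_def by (intro continuous_intros)+
      have "continuous_on (({0..1} \<times> {0..1}) \<times> cball 0 1) (\<lambda>w. uu (fst w))"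
        by (rule continuous_on_compose2[OF cu]) (auto intro: continuous_intros)
      moreover have "continuous_on (({0..1} \<times> {0..1}) \<times> cball 0 1) (\<lambda>w. tt (fst w))"
        by (rule continuous_on_compose2[OF ct]) (auto intro: continuous_intros)
      ultimately show "continuous_on (({0..1} \<times> {0..1}) \<times> cball 0 1) (\<lambda>w. ((uu (fst w), tt (fst w)), snd w))"
        by (intro continuous_on_Pair continuous_on_snd continuous_on_id)
      show "(\<lambda>w. ((uu (fst w), tt (fst w)), snd w)) ` (({0..1} \<times> {0..1}) \<times> cball 0 1) \<subseteq> ({0..1} \<times> {0..1}) \<times> cball 0 1"
        using uu01 tt01 by (auto simp del: atLeastAtMost_iff)
    qed
    then show "continuous_on (({0..1} \<times> {0..1}) \<times> cball 0 1) (\<lambda>(z, x). K z x)"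
      by (simp add: K_def case_prod_unfold)
  next
    fix s \<tau> :: real assume s: "s \<in> {0..1}" and \<tau>: "\<tau> \<in> {0..1}"
    have u: "uu (s,\<tau>) \<in> {0..1}" and t: "tt (s,\<tau>) \<in> {0..1}" using uu01 tt01 s \<tau> by auto
    note G = hb_props[OF HP(2)[OF t]]
    show "inj_on (K (s, \<tau>)) (cball 0 1)" unfolding K_def
      by (rule alex_inj[OF G(2) G(3)]) (use u in auto)
    show "\<And>x. x \<in> ball 0 1 \<Longrightarrow> K (s, \<tau>) x \<in> ball 0 1" unfolding K_def
      by (rule alex_ball[OF G(5) G(2)]) (use u in auto)
  next
    fix s x :: real
    show "\<And>x. x \<in> cball 0 1 \<Longrightarrow> K (s, 0) x = x"
      by (simp add: K_def uu_def tt_def su_def st_def alex_1 HP(3))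
    show "\<And>x. x \<in> cball 0 1 \<Longrightarrow> K (s, 1) x = \<phi> x"
      by (simp add: K_def uu_def tt_def su_def st_def alex_1 HP(4))
  qed (use bd in auto)
  moreover have "braid_path n \<phi> (\<lambda>\<tau>. K (0,\<tau>)) P = braid_path n \<phi> H P"
    by (rule bp_cong[OF _ PB]) (simp add: K_def uu_def tt_def alex_1)
  moreover have "(\<lambda>\<tau>. K (1,\<tau>)) = (\<lambda>\<tau>. alex (su \<tau>) (H (st \<tau>)))"
    by (simp add: K_def uu_def tt_def)
  ultimately show ?thesis by simp
qed

lemma indep_same:
  assumes H: "isotopy H \<phi>" and H': "isotopy H' \<phi>" and PB: "\<And>i. i < n \<Longrightarrow> P i \<in> cball 0 1"
  shows "braid_path n \<phi> (\<lambda>\<tau>. alex (su \<tau>) (H (st \<tau>))) P = braid_path n \<phi> (\<lambda>\<tau>. alex (su \<tau>) (H' (st \<tau>))) P"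
proof (rule bp_cong[OF _ PB])
  note A = isotopy_props[OF H] and B = isotopy_props[OF H']
  fix \<tau> :: real and x :: complex assume \<tau>: "\<tau> \<in> {0..1}" and x: "x \<in> cball 0 1"
  have su0: "0 \<le> su \<tau>" by (simp add: su_def)
  consider "\<tau> \<le> 1/3" | "1/3 \<le> \<tau>" "\<tau> \<le> 2/3" | "2/3 \<le> \<tau>" by linarith
  then show "alex (su \<tau>) (H (st \<tau>)) x = alex (su \<tau>) (H' (st \<tau>)) x"
  proof cases
    case 1
    then have "st \<tau> = 0" by (simp add: st_def)
    then show ?thesis using alex_idfun[OF x _ su0] A(3) B(3) by simp
  next
    case 2
    then have "su \<tau> = 0" by (simp add: su_def)
    then show ?thesis by (simp add: alex_0)
  next
    case 3
    then have "st \<tau> = 1" by (simp add: st_def)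
    then show ?thesis using alex_cong[OF x _ su0, of "H 1" "H' 1"] A(4) B(4) by simp
  qed
qed

lemma indep:
  assumes phi: "homeo_bd \<phi>" and H: "isotopy H \<phi>" and H': "isotopy H' \<phi>" and bd: "beta_defined n \<phi> P"
  shows "homotopic_paths (conf n) (braid_path n \<phi> H P) (braid_path n \<phi> H' P)"
proof -
  have PB: "\<And>i. i < n \<Longrightarrow> P i \<in> cball 0 1" using bd by (auto simp: beta_defined_def)
  have "homotopic_paths (conf n) (braid_path n \<phi> (\<lambda>\<tau>. alex (su \<tau>) (H' (st \<tau>))) P) (braid_path n \<phi> H' P)"
    by (rule homotopic_paths_sym[OF indep_half[OF phi H' bd]])
  then have "homotopic_paths (conf n) (braid_path n \<phi> (\<lambda>\<tau>. alex (su \<tau>) (H (st \<tau>))) P) (braid_path n \<phi> H' P)"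
    by (simp only: indep_same[OF H H' PB])
  then show ?thesis
    by (rule homotopic_paths_trans[OF indep_half[OF phi H bd]])
qed



definition near :: "nat \<Rightarrow> (nat \<Rightarrow> complex) \<Rightarrow> real \<Rightarrow> (nat \<Rightarrow> complex) \<Rightarrow> bool" where
  "near n P e P' \<longleftrightarrow> (\<forall>i<n. dist (P' i) (P i) < e)"

lemma near_mono: "near n P e P' \<Longrightarrow> e \<le> e' \<Longrightarrow> near n P e' P'"
  by (auto simp: near_def)

lemma box_and:
  assumes "\<exists>e>0. \<forall>P'. near n P e P' \<longrightarrow> A P'" and "\<exists>e>0. \<forall>P'. near n P e P' \<longrightarrow> B P'"
  shows "\<exists>e>0. \<forall>P'. near n P e P' \<longrightarrow> A P' \<and> B P'"
proof -
  obtain e1 where e1: "e1 > 0" "\<forall>P'. near n P e1 P' \<longrightarrow> A P'" using assms(1) by blast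
  obtain e2 where e2: "e2 > 0" "\<forall>P'. near n P e2 P' \<longrightarrow> B P'" using assms(2) by blast
  show ?thesis
    by (rule exI[of _ "min e1 e2"]) (use e1 e2 near_mono in \<open>auto\<close>)
qed

lemma box_all:
  assumes "finite I" and "\<And>k. k \<in> I \<Longrightarrow> \<exists>e>0. \<forall>P'. near n P e P' \<longrightarrow> R k P'"
  shows "\<exists>e>0. \<forall>P'. near n P e P' \<longrightarrow> (\<forall>k\<in>I. R k P')"
  using assms
proof (induction I rule: finite_induct)
  case empty
  then show ?case by (auto intro: exI[of _ 1])
next
  case (insert x F)
  have "\<exists>e>0. \<forall>P'. near n P e P' \<longrightarrow> R x P' \<and> (\<forall>k\<in>F. R k P')"
    by (rule box_and) (use insert in auto)
  then show ?case by auto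
qed

definition segok :: "nat \<Rightarrow> nat \<Rightarrow> nat \<Rightarrow> complex \<Rightarrow> complex \<Rightarrow> bool" where
  "segok n i j a b \<longleftrightarrow> (\<forall>s\<in>{0..1::real}. (1 - s) *\<^sub>R qpt n i + s *\<^sub>R a \<noteq> (1 - s) *\<^sub>R qpt n j + s *\<^sub>R b)"

lemma Omega_alt: "P \<in> Omega n \<longleftrightarrow> (\<forall>i<n. P i \<in> cball 0 1) \<and> (\<forall>i<n. \<forall>j<n. i \<noteq> j \<longrightarrow> segok n i j (P i) (P j))"
  by (simp add: Omega_def segok_def)

lemma seg_open:
  fixes c w :: complex
  assumes c: "c \<noteq> 0" and ok: "\<forall>s\<in>{0..1::real}. (1 - s) *\<^sub>R c + s *\<^sub>R w \<noteq> 0"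
  shows "\<exists>m>0. \<forall>w'. norm (w' - w) < m \<longrightarrow> (\<forall>s\<in>{0..1::real}. (1 - s) *\<^sub>R c + s *\<^sub>R w' \<noteq> 0)"
proof -
  have "\<exists>s0\<in>{0..1::real}. \<forall>s\<in>{0..1}. norm ((1 - s0) *\<^sub>R c + s0 *\<^sub>R w) \<le> norm ((1 - s) *\<^sub>R c + s *\<^sub>R w)"
    by (rule continuous_attains_inf) (auto intro!: continuous_intros)
  then obtain s0 where s0: "s0 \<in> {0..1}" and min: "\<And>s. s \<in> {0..1} \<Longrightarrow> norm ((1 - s0) *\<^sub>R c + s0 *\<^sub>R w) \<le> norm ((1 - s) *\<^sub>R c + s *\<^sub>R w)"
    by blast
  define m where "m = norm ((1 - s0) *\<^sub>R c + s0 *\<^sub>R w)"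
  have m: "m > 0" using ok s0 by (simp add: m_def)
  show ?thesis
  proof (intro exI conjI allI impI ballI)
    show "m > 0" by (rule m)
    fix w' :: complex and s :: real assume w': "norm (w' - w) < m" and s: "s \<in> {0..1}"
    have "(1 - s) *\<^sub>R c + s *\<^sub>R w' = ((1 - s) *\<^sub>R c + s *\<^sub>R w) + s *\<^sub>R (w' - w)"
      by (simp add: algebra_simps)
    moreover have "norm (s *\<^sub>R (w' - w)) < m"
    proof -
      have "norm (s *\<^sub>R (w' - w)) = s * norm (w' - w)" using s by simp
      also have "\<dots> \<le> norm (w' - w)" using s by (intro mult_left_le_one_le) auto
      finally show ?thesis using w' by simp
    qed
    moreover have "m \<le> norm ((1 - s) *\<^sub>R c + s *\<^sub>R w)" using min[OF s] by (simp add: m_def)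
    moreover have "norm ((1 - s) *\<^sub>R c + s *\<^sub>R w) - norm (s *\<^sub>R (w' - w)) \<le> norm (((1 - s) *\<^sub>R c + s *\<^sub>R w) + s *\<^sub>R (w' - w))"
      by (rule norm_diff_ineq)
    ultimately have "norm ((1 - s) *\<^sub>R c + s *\<^sub>R w') > 0" by (simp only:)
    then show "(1 - s) *\<^sub>R c + s *\<^sub>R w' \<noteq> 0" by auto
  qed
qed

lemma segok_iff: "segok n i j a b \<longleftrightarrow> (\<forall>s\<in>{0..1::real}. (1 - s) *\<^sub>R (qpt n i - qpt n j) + s *\<^sub>R (a - b) \<noteq> 0)"
  unfolding segok_def by (simp add: algebra_simps)

lemma segok_open:
  assumes ij: "i \<noteq> j" and ok: "segok n i j a b"
  shows "\<exists>m>0. \<forall>a' b'. dist a' a < m \<longrightarrow> dist b' b < m \<longrightarrow> segok n i j a' b'"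
proof -
  have c: "qpt n i - qpt n j \<noteq> 0" using ij qpt_inj by auto
  obtain m where m: "m > 0" and H: "\<forall>w'. norm (w' - (a - b)) < m \<longrightarrow>
      (\<forall>s\<in>{0..1::real}. (1 - s) *\<^sub>R (qpt n i - qpt n j) + s *\<^sub>R w' \<noteq> 0)"
    using seg_open[OF c] ok segok_iff by blast
  show ?thesis
  proof (intro exI conjI allI impI)
    show "m/2 > 0" using m by simp
    fix a' b' assume a': "dist a' a < m/2" and b': "dist b' b < m/2"
    have e: "(a' - b') - (a - b) = (a' - a) - (b' - b)" by (simp add: algebra_simps)
    have "norm ((a' - b') - (a - b)) \<le> norm (a' - a) + norm (b' - b)"
      unfolding e by (rule norm_triangle_ineq4)
    also have "\<dots> < m" using a' b' by (simp add: dist_norm)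
    finally show "segok n i j a' b'" using H segok_iff by blast
  qed
qed

lemma isCont_eps: "continuous (at x) f \<Longrightarrow> e > 0 \<Longrightarrow> \<exists>d>0. \<forall>y. dist y x < d \<longrightarrow> dist (f y) (f x) < (e::real)"
  by (simp add: continuous_at_eps_delta)

lemma bd_open:
  assumes phi: "homeo_bd \<phi>" and bd: "beta_defined n \<phi> P"
  shows "\<exists>e>0. \<forall>P'. near n P e P' \<longrightarrow> beta_defined n \<phi> P'"
proof -
  have Pb: "\<And>i. i < n \<Longrightarrow> P i \<in> ball 0 1" and Pd: "\<And>i j. i < n \<Longrightarrow> j < n \<Longrightarrow> i \<noteq> j \<Longrightarrow> P i \<noteq> P j"
    and PO: "\<And>i j. i < n \<Longrightarrow> j < n \<Longrightarrow> i \<noteq> j \<Longrightarrow> segok n i j (P i) (P j)"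
    and PhO: "\<And>i j. i < n \<Longrightarrow> j < n \<Longrightarrow> i \<noteq> j \<Longrightarrow> segok n i j (\<phi> (P i)) (\<phi> (P j))"
    using bd by (auto simp: beta_defined_def Omega_alt)
  note PH = hb_props[OF phi]
  have A: "\<exists>e>0. \<forall>P'. near n P e P' \<longrightarrow> (\<forall>k\<in>{..<n}. P' k \<in> ball 0 1)"
  proof (rule box_all)
    fix k assume k: "k \<in> {..<n}"
    show "\<exists>e>0. \<forall>P'. near n P e P' \<longrightarrow> P' k \<in> ball 0 1"
    proof (intro exI conjI allI impI)
      show "1 - norm (P k) > 0" using Pb k by auto
      fix P' assume "near n P (1 - norm (P k)) P'"
      then have "dist (P' k) (P k) < 1 - norm (P k)" using k by (auto simp: near_def)
      moreover have "norm (P' k) \<le> norm (P k) + dist (P' k) (P k)"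
        using norm_triangle_sub[of "P' k" "P k"] by (simp add: dist_norm)
      ultimately show "P' k \<in> ball 0 1" by simp
    qed
  qed simp
  have B: "\<exists>e>0. \<forall>P'. near n P e P' \<longrightarrow> (\<forall>k\<in>{..<n}\<times>{..<n}. fst k \<noteq> snd k \<longrightarrow> P' (fst k) \<noteq> P' (snd k))"
  proof (rule box_all)
    fix k assume k: "k \<in> {..<n}\<times>{..<n}"
    show "\<exists>e>0. \<forall>P'. near n P e P' \<longrightarrow> (fst k \<noteq> snd k \<longrightarrow> P' (fst k) \<noteq> P' (snd k))"
    proof (cases "fst k = snd k")
      case True then show ?thesis by (auto intro: exI[of _ 1])
    next
      case False
      let ?d = "dist (P (fst k)) (P (snd k)) / 2"
      show ?thesis
      proof (intro exI conjI allI impI)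
        show "?d > 0" using Pd[of "fst k" "snd k"] k False by auto
        fix P' assume "near n P ?d P'"
        then have "dist (P' (fst k)) (P (fst k)) < ?d" "dist (P' (snd k)) (P (snd k)) < ?d" using k by (auto simp: near_def)
        then have "dist (P (fst k)) (P' (fst k)) + dist (P' (snd k)) (P (snd k)) < 2 * ?d"
          by (simp add: dist_commute)
        moreover have "dist (P (fst k)) (P (snd k)) \<le> dist (P (fst k)) (P' (fst k)) + dist (P' (fst k)) (P (snd k))"
          by (rule dist_triangle)
        ultimately show "P' (fst k) \<noteq> P' (snd k)" by auto
      qed
    qed
  qed simp
  have C: "\<exists>e>0. \<forall>P'. near n P e P' \<longrightarrow> (\<forall>k\<in>{..<n}\<times>{..<n}. fst k \<noteq> snd k \<longrightarrow> segok n (fst k) (snd k) (P' (fst k)) (P' (snd k)))"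
  proof (rule box_all)
    fix k assume k: "k \<in> {..<n}\<times>{..<n}"
    show "\<exists>e>0. \<forall>P'. near n P e P' \<longrightarrow> (fst k \<noteq> snd k \<longrightarrow> segok n (fst k) (snd k) (P' (fst k)) (P' (snd k)))"
    proof (cases "fst k = snd k")
      case True then show ?thesis by (auto intro: exI[of _ 1])
    next
      case False
      obtain m where m: "m > 0" "\<forall>a' b'. dist a' (P (fst k)) < m \<longrightarrow> dist b' (P (snd k)) < m \<longrightarrow> segok n (fst k) (snd k) a' b'"
        using segok_open[OF False PO[of "fst k" "snd k"]] k False by auto
      show ?thesis
      proof (intro exI conjI allI impI)
        show "m > 0" by (rule m)
        fix P' assume "near n P m P'"
        then show "segok n (fst k) (snd k) (P' (fst k)) (P' (snd k))" using m k by (auto simp: near_def)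
      qed
    qed
  qed simp
  have D: "\<exists>e>0. \<forall>P'. near n P e P' \<longrightarrow> (\<forall>k\<in>{..<n}\<times>{..<n}. fst k \<noteq> snd k \<longrightarrow> segok n (fst k) (snd k) (\<phi> (P' (fst k))) (\<phi> (P' (snd k))))"
  proof (rule box_all)
    fix k assume k: "k \<in> {..<n}\<times>{..<n}"
    show "\<exists>e>0. \<forall>P'. near n P e P' \<longrightarrow> (fst k \<noteq> snd k \<longrightarrow> segok n (fst k) (snd k) (\<phi> (P' (fst k))) (\<phi> (P' (snd k))))"
    proof (cases "fst k = snd k")
      case True then show ?thesis by (auto intro: exI[of _ 1])
    next
      case False
      obtain m where m: "m > 0" "\<forall>a' b'. dist a' (\<phi> (P (fst k))) < m \<longrightarrow> dist b' (\<phi> (P (snd k))) < m \<longrightarrow> segok n (fst k) (snd k) a' b'"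
        using segok_open[OF False PhO[of "fst k" "snd k"]] k False by auto
      have ct: "continuous (at (P j)) \<phi>" if "j < n" for j
        by (rule continuous_on_interior[OF PH(1)]) (use Pb[OF that] in simp)
      obtain d1 where d1: "d1 > 0" "\<forall>y. dist y (P (fst k)) < d1 \<longrightarrow> dist (\<phi> y) (\<phi> (P (fst k))) < m"
        using isCont_eps[OF ct[of "fst k"] m(1)] k by auto
      obtain d2 where d2: "d2 > 0" "\<forall>y. dist y (P (snd k)) < d2 \<longrightarrow> dist (\<phi> y) (\<phi> (P (snd k))) < m"
        using isCont_eps[OF ct[of "snd k"] m(1)] k by auto
      show ?thesis
      proof (intro exI conjI allI impI)
        show "min d1 d2 > 0" using d1 d2 by simp
        fix P' assume "near n P (min d1 d2) P'"
        then have "dist (P' (fst k)) (P (fst k)) < d1" "dist (P' (snd k)) (P (snd k)) < d2" using k by (auto simp: near_def)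
        then show "segok n (fst k) (snd k) (\<phi> (P' (fst k))) (\<phi> (P' (snd k)))" using m d1 d2 by blast
      qed
    qed
  qed simp
  obtain e where e: "e > 0" "\<forall>P'. near n P e P' \<longrightarrow> (\<forall>k\<in>{..<n}. P' k \<in> ball 0 1) \<and>
     (\<forall>k\<in>{..<n}\<times>{..<n}. fst k \<noteq> snd k \<longrightarrow> P' (fst k) \<noteq> P' (snd k)) \<and>
     (\<forall>k\<in>{..<n}\<times>{..<n}. fst k \<noteq> snd k \<longrightarrow> segok n (fst k) (snd k) (P' (fst k)) (P' (snd k))) \<and>
     (\<forall>k\<in>{..<n}\<times>{..<n}. fst k \<noteq> snd k \<longrightarrow> segok n (fst k) (snd k) (\<phi> (P' (fst k))) (\<phi> (P' (snd k))))"
    using box_and[OF A box_and[OF B box_and[OF C D]]] by blast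
  show ?thesis
  proof (intro exI conjI allI impI)
    show "e > 0" by (rule e)
    fix P' assume near: "near n P e P'"
    note E = e(2)[rule_format, OF near]
    have b: "\<And>i. i < n \<Longrightarrow> P' i \<in> ball 0 1" using E by auto
    have cb: "\<And>i. i < n \<Longrightarrow> P' i \<in> cball 0 1" using b by (meson ball_subset_cball subsetD)
    show "beta_defined n \<phi> P'"
      unfolding beta_defined_def Omega_alt
    proof (intro conjI allI impI)
      fix i j assume "i < n" "j < n" "i \<noteq> j"
      then show "P' i \<noteq> P' j" "segok n i j (P' i) (P' j)" "segok n i j (\<phi> (P' i)) (\<phi> (P' j))"
        using E by auto
    next
      fix i assume i: "i < n"
      show "P' i \<in> ball 0 1" "P' i \<in> cball 0 1" using b[OF i] by auto
      show "\<phi> (P' i) \<in> cball 0 1" by (rule PH(2)[OF cb[OF i]])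
    qed
  qed
qed

lemma loc_const:
  assumes phi: "homeo_bd \<phi>" and H0: "isotopy H0 \<phi>" and bd: "beta_defined n \<phi> P"
  shows "\<exists>e>0. \<forall>P'. near n P e P' \<longrightarrow> beta_defined n \<phi> P' \<and>
     homotopic_paths (conf n) (braid_path n \<phi> H0 P) (braid_path n \<phi> H0 P')"
proof -
  obtain e where e: "e > 0" "\<forall>P'. near n P e P' \<longrightarrow> beta_defined n \<phi> P'" using bd_open[OF phi bd] by blast
  note HP = isotopy_props[OF H0]
  show ?thesis
  proof (intro exI conjI allI impI)
    show "e > 0" by (rule e)
    fix P' assume near: "near n P e P'"
    then show "beta_defined n \<phi> P'" using e by blast
    define Q where "Q = (\<lambda>(s::real) i. (1 - s) *\<^sub>R P i + s *\<^sub>R P' i)"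
    have nearQ: "near n P e (Q s)" if s: "s \<in> {0..1}" for s
      unfolding near_def
    proof (intro allI impI)
      fix i assume i: "i < n"
      have "Q s i - P i = s *\<^sub>R (P' i - P i)" by (simp add: Q_def algebra_simps)
      then have "dist (Q s i) (P i) = s * dist (P' i) (P i)" using s by (simp add: dist_norm)
      also have "\<dots> \<le> dist (P' i) (P i)" using s by (intro mult_left_le_one_le) auto
      also have "\<dots> < e" using near i by (simp add: near_def)
      finally show "dist (Q s i) (P i) < e" .
    qed
    have "homotopic_paths (conf n) (braid_path n \<phi> (\<lambda>\<tau>. (\<lambda>z::real\<times>real. H0 (snd z)) (0,\<tau>)) (Q 0))
        (braid_path n \<phi> (\<lambda>\<tau>. (\<lambda>z::real\<times>real. H0 (snd z)) (1,\<tau>)) (Q 1))"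
    proof (rule GL[OF phi, of "\<lambda>z::real\<times>real. H0 (snd z)" Q])
      have "continuous_on (({0..1} \<times> {0..1}) \<times> cball 0 1) (\<lambda>w. (\<lambda>(t, x). H0 t x) (snd (fst w), snd w))"
        by (rule continuous_on_compose2[OF HP(1)]) (auto intro!: continuous_intros)
      then show "continuous_on (({0..1} \<times> {0..1}) \<times> cball 0 1) (\<lambda>(z, x). H0 (snd z) x)"
        by (simp add: case_prod_unfold)
    next
      fix s \<tau> :: real assume s: "s \<in> {0..1}" and t: "\<tau> \<in> {0..1}"
      note G = hb_props[OF HP(2)[OF t]]
      show "inj_on ((\<lambda>z. H0 (snd z)) (s, \<tau>)) (cball 0 1)" using G(3) by simp
      show "\<And>x. x \<in> ball 0 1 \<Longrightarrow> (\<lambda>z. H0 (snd z)) (s, \<tau>) x \<in> ball 0 1" using G(5) by simp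
    next
      fix s x :: real
      show "\<And>x. x \<in> cball 0 1 \<Longrightarrow> (\<lambda>z. H0 (snd z)) (s, 0) x = x" using HP(3) by simp
      show "\<And>x. x \<in> cball 0 1 \<Longrightarrow> (\<lambda>z. H0 (snd z)) (s, 1) x = \<phi> x" using HP(4) by simp
    next
      fix i show "continuous_on {0..1} (\<lambda>s. Q s i)" unfolding Q_def by (intro continuous_intros)
    next
      fix s :: real assume "s \<in> {0..1}"
      then show "beta_defined n \<phi> (Q s)" using e nearQ by blast
    qed
    moreover have "Q 0 = P" "Q 1 = P'" by (auto simp: Q_def)
    ultimately show "homotopic_paths (conf n) (braid_path n \<phi> H0 P) (braid_path n \<phi> H0 P')" by simp
  qed
qed

lemma class_eq: "homotopic_paths S g g' \<Longrightarrow> {h. homotopic_paths S g h} = {h. homotopic_paths S g' h}"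
  by (auto intro: homotopic_paths_trans homotopic_paths_sym)

lemma beta_eq:
  assumes phi: "homeo_bd \<phi>" and bd: "beta_defined n \<phi> P"
  shows "beta n \<phi> P = braid_class n (braid_path n \<phi> (\<lambda>u. alex u \<phi>) P)"
proof -
  have iso: "isotopy (\<lambda>u. alex u \<phi>) \<phi>" by (rule iso_exists[OF phi])
  show ?thesis
    unfolding beta_def
  proof (rule someI2)
    show "\<exists>H. isotopy H \<phi> \<and> braid_class n (braid_path n \<phi> (\<lambda>u. alex u \<phi>) P) = braid_class n (braid_path n \<phi> H P)"
      using iso by blast
    fix b assume "\<exists>H. isotopy H \<phi> \<and> b = braid_class n (braid_path n \<phi> H P)"
    then obtain H where H: "isotopy H \<phi>" "b = braid_class n (braid_path n \<phi> H P)" by blast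
    show "b = braid_class n (braid_path n \<phi> (\<lambda>u. alex u \<phi>) P)"
      unfolding H(2) braid_class_def by (rule class_eq[OF indep[OF phi H(1) iso bd]])
  qed
qed

lemma beta_pure:
  assumes phi: "homeo_bd \<phi>" and bd: "beta_defined n \<phi> P"
  shows "beta n \<phi> P \<in> pure_braids n"
proof -
  obtain e where "e > 0" and "\<forall>P'. near n P e P' \<longrightarrow> beta_defined n \<phi> P' \<and>
     homotopic_paths (conf n) (braid_path n \<phi> (\<lambda>u. alex u \<phi>) P) (braid_path n \<phi> (\<lambda>u. alex u \<phi>) P')"
    using loc_const[OF phi iso_exists[OF phi] bd] by blast
  moreover have "near n P e P" using \<open>e > 0\<close> by (simp add: near_def)
  ultimately have hp: "homotopic_paths (conf n) (braid_path n \<phi> (\<lambda>u. alex u \<phi>) P) (braid_path n \<phi> (\<lambda>u. alex u \<phi>) P)"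
    by blast
  show ?thesis
    unfolding beta_eq[OF phi bd] pure_braids_def
    using homotopic_paths_imp_path[OF hp] homotopic_paths_imp_subset[OF hp]
    by (auto simp: pathstart_def pathfinish_def bp_start bp_finish)
qed

lemma space_eq:
  assumes sets: "\<forall>i<n. sets (\<mu> i) = sets (restrict_space borel (cball (0::complex) 1))"
  shows "space (PiM {..<n} \<mu>) = PiE {..<n} (\<lambda>i. cball 0 1)"
proof -
  have "space (\<mu> i) = cball 0 1" if i: "i \<in> {..<n}" for i
  proof -
    have "space (\<mu> i) = space (restrict_space borel (cball (0::complex) 1))"
      by (rule sets_eq_imp_space_eq) (use sets i in auto)
    then show ?thesis by (simp add: space_restrict_space)
  qed
  then show ?thesis unfolding space_PiM by (intro PiE_cong) auto
qed

lemma rat_dense_complex: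
  assumes r: "r > 0"
  shows "\<exists>d\<in>(\<lambda>(a,b). Complex a b) ` (\<rat> \<times> \<rat>). dist d x < r"
proof -
  obtain a where a: "a \<in> \<rat>" "Re x < a" "a < Re x + r/2" using Rats_dense_in_real[of "Re x" "Re x + r/2"] r by auto
  obtain b where b: "b \<in> \<rat>" "Im x < b" "b < Im x + r/2" using Rats_dense_in_real[of "Im x" "Im x + r/2"] r by auto
  have "dist (Complex a b) x \<le> \<bar>Re (Complex a b - x)\<bar> + \<bar>Im (Complex a b - x)\<bar>"
    unfolding dist_norm by (rule cmod_le)
  also have "\<dots> < r" using a b by simp
  finally show ?thesis using a b by force
qed

lemma openmeas:
  assumes sets: "\<forall>i<n. sets (\<mu> i) = sets (restrict_space borel (cball (0::complex) 1))"
   and S: "S \<subseteq> space (PiM {..<n} \<mu>)"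
   and op: "\<And>P. P \<in> S \<Longrightarrow> \<exists>e>0. \<forall>P'\<in>space (PiM {..<n} \<mu>). near n P e P' \<longrightarrow> P' \<in> S"
  shows "S \<in> sets (PiM {..<n} \<mu>)"
proof -
  let ?M = "PiM {..<n} \<mu>"
  let ?Sp = "PiE {..<n} (\<lambda>i. cball (0::complex) 1)"
  have sp: "space ?M = ?Sp" by (rule space_eq[OF sets])
  define D where "D = (\<lambda>(a,b). Complex a b) ` (\<rat> \<times> \<rat>)"
  have cD: "countable D" unfolding D_def using countable_rat by auto
  have dense: "\<And>x r. r > 0 \<Longrightarrow> \<exists>d\<in>D. dist d x < r" unfolding D_def by (rule rat_dense_complex)
  define box where "box = (\<lambda>(c::nat \<Rightarrow> complex, k::nat). {P \<in> ?Sp. \<forall>i<n. dist (c i) (P i) < inverse (real (Suc k))})"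
  have boxm: "box ck \<in> sets ?M" for ck
  proof -
    obtain c k where ck: "ck = (c, k)" by (cases ck) blast
    have "box ck = PiE {..<n} (\<lambda>i. cball 0 1 \<inter> ball (c i) (inverse (real (Suc k))))"
    proof (rule set_eqI)
      fix P
      show "P \<in> box ck \<longleftrightarrow> P \<in> PiE {..<n} (\<lambda>i. cball 0 1 \<inter> ball (c i) (inverse (real (Suc k))))"
        unfolding ck box_def PiE_iff mem_Collect_eq Int_iff lessThan_iff mem_ball Ball_def case_prod_conv
        by blast
    qed
    also have "\<dots> \<in> sets ?M"
    proof (rule sets_PiM_I_finite)
      fix i assume i: "i \<in> {..<n}"
      have "cball 0 1 \<inter> ball (c i) (inverse (real (Suc k))) \<in> sets (restrict_space borel (cball (0::complex) 1))"
        unfolding sets_restrict_space by (rule imageI) (simp add: borel_open)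
      then show "cball 0 1 \<inter> ball (c i) (inverse (real (Suc k))) \<in> sets (\<mu> i)" using sets i by simp
    qed simp
    finally show ?thesis .
  qed
  define I where "I = {ck \<in> PiE {..<n} (\<lambda>_. D) \<times> (UNIV::nat set). box ck \<subseteq> S}"
  have cI: "countable I"
  proof -
    have "countable (PiE {..<n} (\<lambda>_. D) \<times> (UNIV::nat set))"
      using countable_PiE[of "{..<n}" "\<lambda>_. D"] cD by auto
    then show ?thesis unfolding I_def by (rule countable_subset[rotated]) auto
  qed
  have eq: "S = (\<Union>ck\<in>I. box ck)"
  proof
    show "(\<Union>ck\<in>I. box ck) \<subseteq> S" unfolding I_def by auto
    show "S \<subseteq> (\<Union>ck\<in>I. box ck)"
    proof
      fix P assume P: "P \<in> S"
      obtain e where e: "e > 0" "\<forall>P'\<in>space ?M. near n P e P' \<longrightarrow> P' \<in> S" using op[OF P] by blast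
      obtain m where m: "m > 0" "inverse (real m) < e/2" using ex_inverse_of_nat_less[of "e/2"] e by auto
      define k where "k = m - 1"
      have km: "real (Suc k) = real m" using m by (simp add: k_def)
      let ?r = "inverse (real (Suc k))"
      have r: "?r > 0" "?r < e/2" using m km by auto
      define c where "c = (\<lambda>i. if i < n then (SOME d. d \<in> D \<and> dist d (P i) < ?r) else undefined)"
      have c: "c i \<in> D \<and> dist (c i) (P i) < ?r" if "i < n" for i
      proof -
        have "\<exists>d. d \<in> D \<and> dist d (P i) < ?r" using dense[OF r(1)] by blast
        then have "(SOME d. d \<in> D \<and> dist d (P i) < ?r) \<in> D \<and> dist (SOME d. d \<in> D \<and> dist d (P i) < ?r) (P i) < ?r"
          by (rule someI_ex)
        then show ?thesis using that unfolding c_def by simp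
      qed
      have cP: "c \<in> PiE {..<n} (\<lambda>_. D)" using c by (auto simp: PiE_iff c_def extensional_def)
      have PSp: "P \<in> ?Sp" using P S sp by auto
      have inbox: "P \<in> box (c, k)" unfolding box_def using PSp c by auto
      have sub: "box (c, k) \<subseteq> S"
      proof
        fix P' assume P': "P' \<in> box (c, k)"
        have "near n P e P'"
          unfolding near_def
        proof (intro allI impI)
          fix i assume i: "i < n"
          have "dist (P' i) (P i) \<le> dist (P' i) (c i) + dist (c i) (P i)" by (rule dist_triangle)
          also have "\<dots> < ?r + ?r" using P' c[OF i] i unfolding box_def by (auto simp: dist_commute intro: add_strict_mono)
          also have "\<dots> < e" using r by simp
          finally show "dist (P' i) (P i) < e" .
        qed
        moreover have "P' \<in> space ?M" using P' sp unfolding box_def by auto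
        ultimately show "P' \<in> S" using e by blast
      qed
      have "(c, k) \<in> I" unfolding I_def using cP sub by auto
      then show "P \<in> (\<Union>ck\<in>I. box ck)" using inbox by blast
    qed
  qed
  show ?thesis unfolding eq
    by (rule sets.countable_UN'[OF cI]) (use boxm in auto)
qed

theorem lemma2:
  fixes n :: nat and \<phi> :: "complex \<Rightarrow> complex" and \<mu> :: "nat \<Rightarrow> complex measure"
  assumes "n \<ge> 1"
    and "homeo_bd \<phi>"
    and "\<forall>i<n. prob_space (\<mu> i)"
    and "\<forall>i<n. sets (\<mu> i) = sets (restrict_space borel (cball 0 1))"
    and "\<forall>i<n. preserves \<phi> (\<mu> i)"
    and "coherent n \<mu>"
  shows "{P \<in> space (PiM {..<n} \<mu>). beta_defined n \<phi> P} \<in> sets (PiM {..<n} \<mu>)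
    \<and> beta n \<phi> \<in> measurable
         (restrict_space (PiM {..<n} \<mu>) {P \<in> space (PiM {..<n} \<mu>). beta_defined n \<phi> P})
         (count_space (pure_braids n))"
proof -
  note phi = assms(2) and sets = assms(4)
  let ?M = "PiM {..<n} \<mu>"
  let ?D = "{P \<in> space ?M. beta_defined n \<phi> P}"
  have iso: "isotopy (\<lambda>u. alex u \<phi>) \<phi>" by (rule iso_exists[OF phi])
  have Dm: "?D \<in> sets ?M"
  proof (rule openmeas[OF sets])
    show "?D \<subseteq> space ?M" by auto
    fix P assume P: "P \<in> ?D"
    obtain e where e: "e > 0" "\<forall>P'. near n P e P' \<longrightarrow> beta_defined n \<phi> P'" using bd_open[OF phi] P by blast
    show "\<exists>e>0. \<forall>P'\<in>space ?M. near n P e P' \<longrightarrow> P' \<in> ?D" using e by blast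
  qed
  have pre: "beta n \<phi> -` A \<inter> ?D \<in> sets ?M" for A
  proof (rule openmeas[OF sets])
    show "beta n \<phi> -` A \<inter> ?D \<subseteq> space ?M" by auto
    fix P assume P: "P \<in> beta n \<phi> -` A \<inter> ?D"
    then have bd: "beta_defined n \<phi> P" by auto
    obtain e where e: "e > 0" "\<forall>P'. near n P e P' \<longrightarrow> beta_defined n \<phi> P' \<and>
       homotopic_paths (conf n) (braid_path n \<phi> (\<lambda>u. alex u \<phi>) P) (braid_path n \<phi> (\<lambda>u. alex u \<phi>) P')"
      using loc_const[OF phi iso bd] by blast
    show "\<exists>e>0. \<forall>P'\<in>space ?M. near n P e P' \<longrightarrow> P' \<in> beta n \<phi> -` A \<inter> ?D"
    proof (intro exI conjI ballI impI)
      show "e > 0" by (rule e)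
      fix P' assume P': "P' \<in> space ?M" and near: "near n P e P'"
      have bd': "beta_defined n \<phi> P'" and hp: "homotopic_paths (conf n) (braid_path n \<phi> (\<lambda>u. alex u \<phi>) P) (braid_path n \<phi> (\<lambda>u. alex u \<phi>) P')"
        using e near by auto
      have "beta n \<phi> P' = beta n \<phi> P"
        unfolding beta_eq[OF phi bd] beta_eq[OF phi bd'] braid_class_def
        by (rule class_eq[OF hp, symmetric])
      then show "P' \<in> beta n \<phi> -` A \<inter> ?D" using P P' bd' by auto
    qed
  qed
  have meas: "beta n \<phi> \<in> measurable (restrict_space ?M ?D) (count_space (pure_braids n))"
    unfolding measurable_def
  proof (intro CollectI conjI ballI)
    show "beta n \<phi> \<in> space (restrict_space ?M ?D) \<rightarrow> space (count_space (pure_braids n))"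
      using beta_pure[OF phi] by (auto simp: space_restrict_space)
    fix A assume "A \<in> sets (count_space (pure_braids n))"
    have "beta n \<phi> -` A \<inter> space (restrict_space ?M ?D) = ?D \<inter> (beta n \<phi> -` A \<inter> ?D)"
      by (auto simp: space_restrict_space)
    also have "\<dots> \<in> sets (restrict_space ?M ?D)"
      unfolding sets_restrict_space by (rule imageI) (rule pre)
    finally show "beta n \<phi> -` A \<inter> space (restrict_space ?M ?D) \<in> sets (restrict_space ?M ?D)" .
  qed
  show ?thesis using Dm meas by blast
qed

end
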